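(* Let $(X,E,\ell)$ be a uniformly connected edge-labelled directed graph with label alphabet $\Sigma$, equipped with transition probabilities $p(e)\ge\alpha>0$ for all $e\in E$ (for a constant $\alpha$) satisfying $\sum_{e:\,e^-=x}p(e)\le1$ for every $x$. Let $F\subset\Sigma^+$ be a finite, non-empty set which is relatively dense in $(X,E,\ell)$. Then $$\sup_{x,y\in X}\rho_{x,y}(P_F)<\rho(P)\quad\text{strictly.}$$
   Context: $\Sigma$ is a finite alphabet, $\Sigma^+$ the non-empty finite words. Edges $e=(x,a,y)$ have initial vertex $e^-=x$, terminal vertex $e^+=y$ and label $a\in\Sigma$ (two edges with the same endpoints have distinct labels); paths $\pi=e_1\cdots e_n$ (with $e_i^+=e_{i+1}^-$) have labels $\ell(e_1)\cdots\ell(e_n)$. Uniformly connected: for all $x,y$ there is a path from $x$ to $y$, and there is $K$ such that for each edge from $x$ to $y$ there is a path from $y$ to $x$ of length at most $K$. $d^+(x,y)$ is the minimal length of a path from $x$ to $y$; $F$ is relatively dense if there is $D$ such that for each $x$ there are $y$ and $w\in F$ with $d^+(x,y)\le D$ and a path starting at $y$ with label $w$. $P=(p(x,y))$ with $p(x,y)=\sum_{a:(x,a,y)\in E}p(x,a,y)$, $p^{(n)}(x,y)$ its $n$-th matrix power entries, and $\rho(P)=\limsup_n p^{(n)}(x,y)^{1/n}$ (independent of $x,y$). With $\mathbb P(\pi)=\prod_ip(e_i)$, $p_F^{(n)}(x,y)=\sum\mathbb P(\pi)$ over paths $\pi$ of length $n$ from $x$ to $y$ whose label contains no element of $F$ as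 a factor, and $\rho_{x,y}(P_F)=\limsup_n p_F^{(n)}(x,y)^{1/n}$. *)

theory Defs
  imports Complex_Main "HOL-Library.Extended_Real" "HOL-Library.Liminf_Limsup"
begin

type_synonym ('v,'a) edge = "'v \<times> 'a \<times> 'v"

definition e_init :: "('v,'a) edge \<Rightarrow> 'v" where "e_init e = fst e"
definition e_label :: "('v,'a) edge \<Rightarrow> 'a" where "e_label e = fst (snd e)"
definition e_term :: "('v,'a) edge \<Rightarrow> 'v" where "e_term e = snd (snd e)"

fun is_path :: "('v,'a) edge set \<Rightarrow> 'v \<Rightarrow> ('v,'a) edge list \<Rightarrow> 'v \<Rightarrow> bool" where
  "is_path E x [] y = (x = y)"
| "is_path E x (e # es) y = (e \<in> E \<and> e_init e = x \<and> is_path E (e_term e) es y)"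

definition path_label :: "('v,'a) edge list \<Rightarrow> 'a list" where
  "path_label ps = map e_label ps"

definition path_prob :: "(('v,'a) edge \<Rightarrow> real) \<Rightarrow> ('v,'a) edge list \<Rightarrow> real" where
  "path_prob p ps = prod_list (map p ps)"

definition is_factor :: "'a list \<Rightarrow> 'a list \<Rightarrow> bool" where
  "is_factor w u \<longleftrightarrow> (\<exists>s t. u = s @ w @ t)"

definition uniformly_connected :: "'v set \<Rightarrow> ('v,'a) edge set \<Rightarrow> bool" where
  "uniformly_connected X E \<longleftrightarrow>
     (\<forall>x\<in>X. \<forall>y\<in>X. \<exists>ps. is_path E x ps y) \<and>
     (\<exists>K::nat. \<forall>e\<in>E. \<exists>ps. is_path E (e_term e) ps (e_init e) \<and> length ps \<le> K)"

definition dplus :: "('v,'a) edge set \<Rightarrow> 'v \<Rightarrow> 'v \<Rightarrow> nat" where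
  "dplus E x y = (LEAST n. \<exists>ps. is_path E x ps y \<and> length ps = n)"

definition relatively_dense :: "'v set \<Rightarrow> ('v,'a) edge set \<Rightarrow> 'a list set \<Rightarrow> bool" where
  "relatively_dense X E F \<longleftrightarrow>
     (\<exists>D::nat. \<forall>x\<in>X. \<exists>y\<in>X. \<exists>w\<in>F. dplus E x y \<le> D \<and>
        (\<exists>ps z. is_path E y ps z \<and> path_label ps = w))"

definition pmat :: "('v,'a) edge set \<Rightarrow> (('v,'a) edge \<Rightarrow> real) \<Rightarrow> 'v \<Rightarrow> 'v \<Rightarrow> real" where
  "pmat E p x y = (\<Sum>a\<in>{a. (x,a,y) \<in> E}. p (x,a,y))"

fun pmat_pow :: "'v set \<Rightarrow> ('v,'a) edge set \<Rightarrow> (('v,'a) edge \<Rightarrow> real) \<Rightarrow> nat \<Rightarrow> 'v \<Rightarrow> 'v \<Rightarrow> real" where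
  "pmat_pow X E p 0 x y = (if x = y then 1 else 0)"
| "pmat_pow X E p (Suc n) x y = (\<Sum>z\<in>{z\<in>X. pmat E p x z \<noteq> 0}. pmat E p x z * pmat_pow X E p n z y)"

definition spec_rad :: "'v set \<Rightarrow> ('v,'a) edge set \<Rightarrow> (('v,'a) edge \<Rightarrow> real) \<Rightarrow> 'v \<Rightarrow> 'v \<Rightarrow> ereal" where
  "spec_rad X E p x y = limsup (\<lambda>n. ereal (root n (pmat_pow X E p n x y)))"

definition pF_pow :: "('v,'a) edge set \<Rightarrow> (('v,'a) edge \<Rightarrow> real) \<Rightarrow> 'a list set \<Rightarrow> nat \<Rightarrow> 'v \<Rightarrow> 'v \<Rightarrow> real" where
  "pF_pow E p F n x y = (\<Sum>ps\<in>{ps. length ps = n \<and> is_path E x ps y \<and>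
        \<not> (\<exists>w\<in>F. is_factor w (path_label ps))}. path_prob p ps)"

definition spec_rad_F :: "('v,'a) edge set \<Rightarrow> (('v,'a) edge \<Rightarrow> real) \<Rightarrow> 'a list set \<Rightarrow> 'v \<Rightarrow> 'v \<Rightarrow> ereal" where
  "spec_rad_F E p F x y = limsup (\<lambda>n. ereal (root n (pF_pow E p F n x y)))"

end

theory Submission
  imports Defs
begin


lemma is_path_append: "is_path E x (a @ b) y \<longleftrightarrow> (\<exists>u. is_path E x a u \<and> is_path E u b y)"
  by (induction a arbitrary: x) auto

lemma is_path_set: "is_path E x ps y \<Longrightarrow> set ps \<subseteq> E"
  by (induction ps arbitrary: x) auto

lemma is_path_hd: "is_path E x ps y \<Longrightarrow> ps \<noteq> [] \<Longrightarrow> e_init (hd ps) = x"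
  by (cases ps) auto

lemma path_prob_append: "path_prob p (a@b) = path_prob p a * path_prob p b"
  by (simp add: path_prob_def)

lemma path_label_append: "path_label (a@b) = path_label a @ path_label b"
  by (simp add: path_label_def)

definition Paths :: "('v,'a) edge set \<Rightarrow> nat \<Rightarrow> 'v \<Rightarrow> 'v \<Rightarrow> ('v,'a) edge list set" where
  "Paths E n x y = {ps. length ps = n \<and> is_path E x ps y}"

definition PathsFrom :: "('v,'a) edge set \<Rightarrow> nat \<Rightarrow> 'v \<Rightarrow> ('v,'a) edge list set" where
  "PathsFrom E n x = {ps. length ps = n \<and> (\<exists>y. is_path E x ps y)}"

lemma Paths_0: "Paths E 0 x y = (if x = y then {[]} else {})"
  by (auto simp: Paths_def)

lemma Paths_Suc: "Paths E (Suc n) x y = (\<Union>e\<in>{e\<in>E. e_init e = x}. Cons e ` Paths E n (e_term e) y)"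
  by (auto simp: Paths_def length_Suc_conv)

lemma PathsFrom_0: "PathsFrom E 0 x = {[]}"
  by (auto simp: PathsFrom_def)

lemma PathsFrom_Suc: "PathsFrom E (Suc n) x = (\<Union>e\<in>{e\<in>E. e_init e = x}. Cons e ` PathsFrom E n (e_term e))"
  unfolding PathsFrom_def by (force simp: length_Suc_conv)

lemma path_prob_nonneg: "\<forall>e\<in>E. p e \<ge> 0 \<Longrightarrow> set ps \<subseteq> E \<Longrightarrow> path_prob p ps \<ge> 0"
  by (induction ps) (auto simp: path_prob_def)

lemma path_prob_ge: "\<forall>e\<in>E. p e \<ge> a \<Longrightarrow> a \<ge> 0 \<Longrightarrow> set ps \<subseteq> E \<Longrightarrow> path_prob p ps \<ge> a ^ length ps"
proof (induction ps)
  case Nil then show ?case by (simp add: path_prob_def)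
next
  case (Cons e ps)
  then have "p e \<ge> a" "path_prob p ps \<ge> a ^ length ps" by auto
  moreover have "a ^ length ps \<ge> 0" using Cons by simp
  ultimately show ?case using Cons.prems(2) by (simp add: path_prob_def mult_mono order_trans[OF _ \<open>p e \<ge> a\<close>])
qed

locale setting =
  fixes X :: "'v set" and S :: "'a set" and E :: "('v,'a) edge set"
    and p :: "('v,'a) edge \<Rightarrow> real" and \<alpha> :: real and F :: "'a list set"
    and K :: nat and D :: nat
  assumes finS: "finite S"
    and E_sub: "E \<subseteq> X \<times> S \<times> X"
    and apos: "\<alpha> > 0"
    and pge: "\<forall>e\<in>E. p e \<ge> \<alpha>"
    and sub: "\<forall>x\<in>X. \<forall>A. A \<subseteq> {e\<in>E. e_init e = x} \<and> finite A \<longrightarrow> (\<Sum>e\<in>A. p e) \<le> 1"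
    and finF: "finite F" and Fne: "F \<noteq> {}" and Fsub: "F \<subseteq> {w. w \<noteq> [] \<and> set w \<subseteq> S}"
    and conn: "\<forall>x\<in>X. \<forall>y\<in>X. \<exists>ps. is_path E x ps y"
    and ret: "\<forall>e\<in>E. \<exists>ps. is_path E (e_term e) ps (e_init e) \<and> length ps \<le> K"
    and dense: "\<forall>x\<in>X. \<exists>y\<in>X. \<exists>w\<in>F. dplus E x y \<le> D \<and> (\<exists>ps z. is_path E y ps z \<and> path_label ps = w)"
    and Xne: "X \<noteq> {}"
begin

lemma edge_init: "e \<in> E \<Longrightarrow> e_init e \<in> X"
  using E_sub by (auto simp: e_init_def)

lemma edge_term: "e \<in> E \<Longrightarrow> e_term e \<in> X"
  using E_sub by (auto simp: e_term_def)

lemma p_nonneg: "\<forall>e\<in>E. p e \<ge> 0"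
  using pge apos by force

lemma path_end_X: "is_path E x ps y \<Longrightarrow> x \<in> X \<Longrightarrow> y \<in> X"
  by (induction ps arbitrary: x) (auto simp: edge_term)

lemma out_fin: "finite {e\<in>E. e_init e = x}"
proof (cases "x \<in> X")
  case False
  then have "{e\<in>E. e_init e = x} = {}" using edge_init by blast
  then show ?thesis by (metis finite.emptyI)
next
  case True
  show ?thesis
  proof (rule ccontr)
    assume inf: "infinite {e\<in>E. e_init e = x}"
    define n where "n = nat (ceiling (1/\<alpha>)) + 1"
    obtain B where B: "B \<subseteq> {e\<in>E. e_init e = x}" "finite B" "card B = n"
      using infinite_arbitrarily_large[OF inf] by blast
    have s1: "(\<Sum>e\<in>B. p e) \<ge> (\<Sum>e\<in>B. \<alpha>)"
      using B pge by (intro sum_mono) auto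
    have s2: "(\<Sum>e\<in>B. \<alpha>) = n * \<alpha>" using B by simp
    have s3: "n * \<alpha> > 1"
    proof -
      have "real n > 1/\<alpha>" unfolding n_def by linarith
      then show ?thesis using apos by (simp add: field_simps)
    qed
    have "(\<Sum>e\<in>B. p e) > 1" using s1 s2 s3 by linarith
    moreover have "(\<Sum>e\<in>B. p e) \<le> 1" using sub True B by blast
    ultimately show False by simp
  qed
qed

lemma Paths_fin: "finite (Paths E n x y)"
  by (induction n arbitrary: x) (auto simp: Paths_0 Paths_Suc out_fin)

lemma PathsFrom_fin: "finite (PathsFrom E n x)"
  by (induction n arbitrary: x) (auto simp: PathsFrom_0 PathsFrom_Suc out_fin)

lemma sum_Cons_union:
  assumes "\<And>e. finite (A e)"
  shows "(\<Sum>ps\<in>(\<Union>e\<in>{e\<in>E. e_init e = x}. Cons e ` A e). path_prob p ps)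
       = (\<Sum>e\<in>{e\<in>E. e_init e = x}. p e * (\<Sum>ps\<in>A e. path_prob p ps))"
proof -
  have "(\<Sum>ps\<in>(\<Union>e\<in>{e\<in>E. e_init e = x}. Cons e ` A e). path_prob p ps)
      = (\<Sum>e\<in>{e\<in>E. e_init e = x}. \<Sum>ps\<in>Cons e ` A e. path_prob p ps)"
    by (rule sum.UNION_disjoint) (auto simp: out_fin assms)
  also have "\<dots> = (\<Sum>e\<in>{e\<in>E. e_init e = x}. p e * (\<Sum>ps\<in>A e. path_prob p ps))"
    by (intro sum.cong refl) (simp add: sum.reindex sum_distrib_left path_prob_def)
  finally show ?thesis .
qed

lemma PathsFrom_le1: "(\<Sum>ps\<in>PathsFrom E n x. path_prob p ps) \<le> 1"
proof (induction n arbitrary: x)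
  case 0 then show ?case by (simp add: PathsFrom_0 path_prob_def)
next
  case (Suc n)
  have "(\<Sum>ps\<in>PathsFrom E (Suc n) x. path_prob p ps)
     = (\<Sum>e\<in>{e\<in>E. e_init e = x}. p e * (\<Sum>ps\<in>PathsFrom E n (e_term e). path_prob p ps))"
    unfolding PathsFrom_Suc by (rule sum_Cons_union) (rule PathsFrom_fin)
  also have "\<dots> \<le> (\<Sum>e\<in>{e\<in>E. e_init e = x}. p e)"
    using Suc p_nonneg by (intro sum_mono) (simp add: mult_left_le)
  also have "\<dots> \<le> 1"
  proof (cases "x \<in> X")
    case True then show ?thesis using sub out_fin by blast
  next
    case False
    then have "{e\<in>E. e_init e = x} = {}" using edge_init by blast
    then show ?thesis by (metis sum.empty zero_le_one)
  qed
  finally show ?case .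
qed

end

context setting begin

lemma lab_fin: "finite {a. (x,a,z) \<in> E}"
  using finS E_sub by (auto intro: finite_subset[of _ S])

lemma pmat_edges: "(\<Sum>e\<in>{e\<in>E. e_init e = x \<and> e_term e = z}. p e) = pmat E p x z"
proof -
  have "{e\<in>E. e_init e = x \<and> e_term e = z} = (\<lambda>a. (x,a,z)) ` {a. (x,a,z) \<in> E}"
    by (auto simp: e_init_def e_term_def image_def)
  then show ?thesis unfolding pmat_def by (simp add: sum.reindex inj_on_def)
qed

lemma pmat_pos: "e \<in> E \<Longrightarrow> e_init e = x \<Longrightarrow> pmat E p x (e_term e) > 0"
proof -
  assume e: "e \<in> E" "e_init e = x"
  have "pmat E p x (e_term e) \<ge> p e"
    unfolding pmat_edges[symmetric]
    by (rule member_le_sum) (use e p_nonneg in \<open>auto intro: finite_subset[OF _ out_fin[of x]]\<close>)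
  then show ?thesis using e pge apos by force
qed

lemma pmat_zero: "\<not>(\<exists>e\<in>E. e_init e = x \<and> e_term e = z) \<Longrightarrow> pmat E p x z = 0"
  unfolding pmat_edges[symmetric] by (metis (mono_tags, lifting) mem_Collect_eq sum.neutral)

lemma pmat_pow_paths: "pmat_pow X E p n x y = (\<Sum>ps\<in>Paths E n x y. path_prob p ps)"
proof (induction n arbitrary: x)
  case 0 then show ?case by (simp add: Paths_0 path_prob_def)
next
  case (Suc n)
  define Out where "Out = {e\<in>E. e_init e = x}"
  define Z where "Z = {z\<in>X. pmat E p x z \<noteq> 0}"
  have finOut: "finite Out" unfolding Out_def by (rule out_fin)
  have ZO: "Z \<subseteq> e_term ` Out"
  proof
    fix z assume "z \<in> Z"
    then have "pmat E p x z \<noteq> 0" unfolding Z_def by auto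
    then obtain e where "e\<in>E" "e_init e = x" "e_term e = z" using pmat_zero by blast
    then show "z \<in> e_term ` Out" unfolding Out_def by auto
  qed
  have OZ: "e_term ` Out \<subseteq> Z"
    unfolding Out_def Z_def using pmat_pos edge_term by fastforce
  have finZ: "finite Z" using ZO finOut finite_subset by blast
  have "(\<Sum>ps\<in>Paths E (Suc n) x y. path_prob p ps)
     = (\<Sum>e\<in>Out. p e * (\<Sum>ps\<in>Paths E n (e_term e) y. path_prob p ps))"
    unfolding Paths_Suc Out_def by (rule sum_Cons_union) (rule Paths_fin)
  also have "\<dots> = (\<Sum>e\<in>Out. p e * pmat_pow X E p n (e_term e) y)"
    using Suc by simp
  also have "\<dots> = (\<Sum>z\<in>Z. \<Sum>e\<in>{e\<in>Out. e_term e = z}. p e * pmat_pow X E p n (e_term e) y)"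
    by (rule sum.group[symmetric]) (use finOut finZ OZ in auto)
  also have "\<dots> = (\<Sum>z\<in>Z. pmat E p x z * pmat_pow X E p n z y)"
  proof (intro sum.cong refl)
    fix z assume "z \<in> Z"
    have eq: "{e\<in>Out. e_term e = z} = {e\<in>E. e_init e = x \<and> e_term e = z}"
      unfolding Out_def by auto
    have "(\<Sum>e\<in>{e\<in>Out. e_term e = z}. p e * pmat_pow X E p n (e_term e) y)
        = (\<Sum>e\<in>{e\<in>Out. e_term e = z}. p e * pmat_pow X E p n z y)"
      by (rule sum.cong) auto
    also have "\<dots> = (\<Sum>e\<in>{e\<in>Out. e_term e = z}. p e) * pmat_pow X E p n z y"
      by (simp add: sum_distrib_right)
    also have "\<dots> = pmat E p x z * pmat_pow X E p n z y"
      unfolding eq pmat_edges ..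
    finally show "(\<Sum>e\<in>{e\<in>Out. e_term e = z}. p e * pmat_pow X E p n (e_term e) y)
        = pmat E p x z * pmat_pow X E p n z y" .
  qed
  also have "\<dots> = pmat_pow X E p (Suc n) x y" by (simp add: Z_def)
  finally show ?case by simp
qed

lemma pmat_pow_le1: "pmat_pow X E p n x y \<le> 1"
proof -
  have "(\<Sum>ps\<in>Paths E n x y. path_prob p ps) \<le> (\<Sum>ps\<in>PathsFrom E n x. path_prob p ps)"
    by (rule sum_mono2[OF PathsFrom_fin]) (auto simp: Paths_def PathsFrom_def
        intro!: path_prob_nonneg[OF p_nonneg] dest: is_path_set)
  then show ?thesis using PathsFrom_le1 pmat_pow_paths by (metis order_trans)
qed

lemma pmat_pow_nonneg: "pmat_pow X E p n x y \<ge> 0"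
  unfolding pmat_pow_paths
  by (rule sum_nonneg) (auto simp: Paths_def intro!: path_prob_nonneg[OF p_nonneg] dest: is_path_set)

definition Ffree :: "('v,'a) edge list \<Rightarrow> bool" where
  "Ffree ps \<longleftrightarrow> \<not> (\<exists>w\<in>F. is_factor w (path_label ps))"

lemma pF_paths: "pF_pow E p F n x y = (\<Sum>ps\<in>{ps\<in>Paths E n x y. Ffree ps}. path_prob p ps)"
  unfolding pF_pow_def Paths_def Ffree_def by (simp add: conj_assoc)

lemma pF_nonneg: "pF_pow E p F n x y \<ge> 0"
  unfolding pF_paths
  by (rule sum_nonneg) (auto simp: Paths_def intro!: path_prob_nonneg[OF p_nonneg] dest: is_path_set)

end

context setting begin

lemma return_path: "is_path E x ps y \<Longrightarrow> \<exists>qs. is_path E y qs x \<and> length qs \<le> K * length ps"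
proof (induction ps arbitrary: x)
  case Nil then show ?case by (intro exI[of _ "[]"]) simp
next
  case (Cons e ps)
  then have e: "e \<in> E" "e_init e = x" and pe: "is_path E (e_term e) ps y" by auto
  obtain qs where qs: "is_path E y qs (e_term e)" "length qs \<le> K * length ps"
    using Cons.IH[OF pe] by blast
  obtain rs where rs: "is_path E (e_term e) rs (e_init e)" "length rs \<le> K"
    using ret e by blast
  have "is_path E y (qs @ rs) x" using qs rs e by (auto simp: is_path_append)
  moreover have "length (qs @ rs) \<le> K * length (e # ps)" using qs rs by simp
  ultimately show ?case by blast
qed

lemma alpha_le1: "\<alpha> \<le> 1"
proof -
  obtain x where x: "x \<in> X" using Xne by blast
  then obtain y w ps z where "y \<in> X" "w \<in> F" "is_path E y ps z" "path_label ps = w"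
    using dense by blast
  moreover have "w \<noteq> []" using \<open>w \<in> F\<close> Fsub by auto
  ultimately have "ps \<noteq> []" "is_path E y ps z" by (auto simp: path_label_def)
  then obtain e ps' where "ps = e # ps'" "e \<in> E" "e_init e = y" by (cases ps) auto
  then have "(\<Sum>e\<in>{e}. p e) \<le> 1" using sub \<open>y \<in> X\<close> by blast
  then show ?thesis using pge \<open>e \<in> E\<close> by auto
qed

definition M :: nat where "M = Max (length ` F)"
definition N :: nat where "N = D + M + 1"
definition L :: nat where "L = D + M + K * (D + M)"

lemma N_pos: "N \<ge> 1" unfolding N_def by simp

definition detp :: "'v \<Rightarrow> ('v,'a) edge list \<Rightarrow> bool" where
  "detp v d \<longleftrightarrow> is_path E v d v \<and> length d \<le> L \<and>
     (\<exists>q1 q2 q3. d = q1 @ q2 @ q3 \<and> length q1 + length q2 \<le> D + M \<and> path_label q2 \<in> F)"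

lemma det_exists: "v \<in> X \<Longrightarrow> \<exists>d. detp v d"
proof -
  assume v: "v \<in> X"
  obtain y w where y: "y \<in> X" "w \<in> F" "dplus E v y \<le> D" and "\<exists>ps z. is_path E y ps z \<and> path_label ps = w"
    using dense v by blast
  then obtain ps z where ps: "is_path E y ps z" "path_label ps = w" by blast
  have "\<exists>n q. is_path E v q y \<and> length q = n" using conn v y by blast
  then have "\<exists>q. is_path E v q y \<and> length q = dplus E v y"
    unfolding dplus_def by (rule LeastI_ex)
  then obtain q1 where q1: "is_path E v q1 y" "length q1 \<le> D" using y by auto
  have "length w \<le> M" using y(2) finF unfolding M_def by (auto intro: Max_ge)
  then have lw: "length ps \<le> M" using ps(2) by (auto simp: path_label_def)
  have p12: "is_path E v (q1 @ ps) z" using q1 ps by (auto simp: is_path_append)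
  obtain q3 where q3: "is_path E z q3 v" "length q3 \<le> K * length (q1 @ ps)"
    using return_path[OF p12] by blast
  have "K * length (q1 @ ps) \<le> K * (D + M)" using q1 lw by simp
  have a1: "is_path E v (q1 @ ps @ q3) v" using p12 q3 is_path_append by (metis append.assoc)
  have l3: "length q3 \<le> K * (D + M)" using q3(2) \<open>K * length (q1 @ ps) \<le> K * (D + M)\<close> by linarith
  have a2: "length (q1 @ ps @ q3) \<le> L" using q1 lw l3 unfolding L_def by simp
  have a3: "\<exists>a b c. q1 @ ps @ q3 = a @ b @ c \<and> length a + length b \<le> D + M \<and> path_label b \<in> F"
    by (intro exI[of _ q1] exI[of _ ps] exI[of _ q3]) (use q1 lw ps y in auto)
  have "detp v (q1 @ ps @ q3)" unfolding detp_def using a1 a2 a3 by blast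
  then show ?thesis by blast
qed

definition det :: "'v \<Rightarrow> ('v,'a) edge list" where
  "det v = (SOME d. detp v d)"

lemma det: "v \<in> X \<Longrightarrow> detp v (det v)"
  unfolding det_def using det_exists by (metis someI_ex)

lemma det_ne: "v \<in> X \<Longrightarrow> det v \<noteq> []"
proof -
  assume "v \<in> X"
  then obtain q1 q2 q3 where "det v = q1 @ q2 @ q3" "path_label q2 \<in> F"
    using det unfolding detp_def by blast
  then show ?thesis using Fsub by (auto simp: path_label_def)
qed

fun ins :: "bool list \<Rightarrow> ('v,'a) edge list \<Rightarrow> ('v,'a) edge list" where
  "ins [] ps = ps"
| "ins (b # bs) ps = (if b then det (e_init (hd ps)) else []) @ take N ps @ ins bs (drop N ps)"

lemma det_path: "v \<in> X \<Longrightarrow> is_path E v (det v) v"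
  using det unfolding detp_def by blast

lemma det_len: "v \<in> X \<Longrightarrow> length (det v) \<le> L"
  using det unfolding detp_def by blast

lemma ins_path: "is_path E x ps y \<Longrightarrow> x \<in> X \<Longrightarrow> N * length bs \<le> length ps \<Longrightarrow> is_path E x (ins bs ps) y"
proof (induction bs arbitrary: x ps)
  case Nil then show ?case by simp
next
  case (Cons b bs)
  have "ps \<noteq> []" using Cons.prems(3) N_pos by (cases ps) auto
  then have hx: "e_init (hd ps) = x" by (rule is_path_hd[OF Cons.prems(1)])
  have "is_path E x (take N ps @ drop N ps) y" using Cons.prems(1) by simp
  then obtain u where u: "is_path E x (take N ps) u" "is_path E u (drop N ps) y"
    unfolding is_path_append by blast
  have uX: "u \<in> X" using path_end_X[OF u(1) Cons.prems(2)] .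
  have l: "N * length bs \<le> length (drop N ps)" using Cons.prems(3) by simp
  have r: "is_path E u (ins bs (drop N ps)) y"
    by (rule Cons.IH[OF u(2) uX l])
  have d: "is_path E x (if b then det (e_init (hd ps)) else []) x"
    using det_path[OF Cons.prems(2)] hx by simp
  have "is_path E x ((if b then det (e_init (hd ps)) else []) @ take N ps @ ins bs (drop N ps)) y"
    unfolding is_path_append using d u(1) r by blast
  then show ?case by simp
qed

lemma ins_len: "set ps \<subseteq> E \<Longrightarrow> N * length bs \<le> length ps \<Longrightarrow> length (ins bs ps) \<le> length ps + L * length bs"
proof (induction bs arbitrary: ps)
  case Nil then show ?case by simp
next
  case (Cons b bs)
  have "ps \<noteq> []" using Cons.prems(2) N_pos by (cases ps) auto
  then have "hd ps \<in> E" using Cons.prems(1) by auto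
  then have "length (det (e_init (hd ps))) \<le> L" using det edge_init detp_def by blast
  moreover have "length (ins bs (drop N ps)) \<le> length (drop N ps) + L * length bs"
    by (rule Cons.IH) (use Cons.prems in \<open>auto dest: in_set_dropD\<close>)
  moreover have "length (take N ps) + length (drop N ps) = length ps" by simp
  ultimately show ?case by auto
qed

lemma ins_len_ge: "N * length bs \<le> length ps \<Longrightarrow> length (ins bs ps) \<ge> length ps"
proof (induction bs arbitrary: ps)
  case Nil then show ?case by simp
next
  case (Cons b bs)
  have "length (ins bs (drop N ps)) \<ge> length (drop N ps)"
    by (rule Cons.IH) (use Cons.prems in auto)
  moreover have "length (take N ps) + length (drop N ps) = length ps" by simp
  ultimately show ?case by auto
qed

definition W :: "real \<Rightarrow> ('v,'a) edge list \<Rightarrow> real" where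
  "W z ps = path_prob p ps * z ^ length ps"

lemma W_append: "W z (a @ b) = W z a * W z b"
  unfolding W_def by (simp add: path_prob_append power_add)

lemma W_nonneg: "z \<ge> 0 \<Longrightarrow> set ps \<subseteq> E \<Longrightarrow> W z ps \<ge> 0"
  unfolding W_def using path_prob_nonneg[OF p_nonneg] by simp

definition gam :: "real \<Rightarrow> real" where "gam z = (\<alpha> * min 1 z) ^ L"

lemma gam_pos: "z > 0 \<Longrightarrow> gam z > 0"
  unfolding gam_def using apos by simp

lemma W_det: assumes "z > 0" "v \<in> X" shows "W z (det v) \<ge> gam z"
proof -
  have d: "detp v (det v)" using det assms(2) by blast
  then have "is_path E v (det v) v" and lL: "length (det v) \<le> L"
    unfolding detp_def by simp_all
  then have sE: "set (det v) \<subseteq> E" by (simp add: is_path_set)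
  have a0: "\<alpha> \<ge> 0" using apos by simp
  have pp: "path_prob p (det v) \<ge> \<alpha> ^ length (det v)"
    by (rule path_prob_ge[OF pge a0 sE])
  have zz: "z ^ length (det v) \<ge> (min 1 z) ^ length (det v)"
    using assms(1) by (intro power_mono) auto
  have m0: "(min 1 z) ^ length (det v) \<ge> 0" using assms(1) by simp
  have "W z (det v) \<ge> \<alpha> ^ length (det v) * (min 1 z) ^ length (det v)"
    unfolding W_def by (rule mult_mono[OF pp zz]) (use apos m0 pp zero_le_power[OF a0, of "length (det v)"] in linarith)+
  also have "\<alpha> ^ length (det v) * (min 1 z) ^ length (det v) = (\<alpha> * min 1 z) ^ length (det v)"
    by (simp add: power_mult_distrib)
  finally have w1: "W z (det v) \<ge> (\<alpha> * min 1 z) ^ length (det v)" .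
  have b0: "\<alpha> * min 1 z \<ge> 0" using apos assms(1) by simp
  have b1: "\<alpha> * min 1 z \<le> 1"
    using alpha_le1 apos assms(1) by (intro mult_le_one) auto
  have "(\<alpha> * min 1 z) ^ L \<le> (\<alpha> * min 1 z) ^ length (det v)"
    by (rule power_decreasing[OF lL b0 b1])
  then show ?thesis using w1 unfolding gam_def by linarith
qed

lemma ins_weight:
  assumes "z > 0"
  shows "set ps \<subseteq> E \<Longrightarrow> N * length bs \<le> length ps \<Longrightarrow>
    W z (ins bs ps) \<ge> W z ps * gam z ^ length (filter id bs)"
proof (induction bs arbitrary: ps)
  case Nil then show ?case by simp
next
  case (Cons b bs)
  have "ps \<noteq> []" using Cons.prems(2) N_pos by (cases ps) auto
  then have "hd ps \<in> E" using Cons.prems(1) by auto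
  then have vX: "e_init (hd ps) \<in> X" using edge_init by blast
  define dd where "dd = (if b then det (e_init (hd ps)) else [])"
  have sd: "set (drop N ps) \<subseteq> E" "set (take N ps) \<subseteq> E" using Cons.prems(1)
    by (auto dest: in_set_dropD in_set_takeD)
  have IH: "W z (ins bs (drop N ps)) \<ge> W z (drop N ps) * gam z ^ length (filter id bs)"
    by (rule Cons.IH[OF sd(1)]) (use Cons.prems in auto)
  have dd: "W z dd \<ge> (if b then gam z else 1)"
    unfolding dd_def using W_det[OF assms vX] by (simp add: W_def path_prob_def)
  have g0: "gam z \<ge> 0" using gam_pos assms by (simp add: less_imp_le)
  have dd0: "W z dd \<ge> 0" using dd g0 by (cases b) auto
  have w1: "W z (take N ps) \<ge> 0" "W z (drop N ps) \<ge> 0" using sd W_nonneg assms by auto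
  define A where "A = W z (take N ps)"
  define B where "B = W z (drop N ps)"
  define G where "G = gam z ^ length (filter id bs)"
  define c where "c = (if b then gam z else 1)"
  have Wps: "W z ps = A * B" unfolding A_def B_def
    by (metis W_append append_take_drop_id)
  have G0: "G \<ge> 0" unfolding G_def using g0 by simp
  have lhs: "W z ps * gam z ^ length (filter id (b # bs)) = c * A * (B * G)"
    unfolding Wps c_def G_def by (cases b) (simp_all add: algebra_simps)
  have rhs: "W z (ins (b # bs) ps) = W z dd * A * W z (ins bs (drop N ps))"
    by (simp add: dd_def A_def W_append)
  have c0: "c \<ge> 0" unfolding c_def using g0 by simp
  have "c * A \<le> W z dd * A" using dd w1(1) unfolding c_def A_def by (rule mult_right_mono)
  moreover have "B * G \<le> W z (ins bs (drop N ps))" using IH unfolding B_def G_def .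
  moreover have "0 \<le> B * G" using w1(2) G0 unfolding B_def by simp
  moreover have "0 \<le> W z dd * A" using dd0 w1(1) unfolding A_def by simp
  ultimately have "c * A * (B * G) \<le> W z dd * A * W z (ins bs (drop N ps))"
    by (metis mult_mono)
  then show ?case unfolding lhs rhs .
qed

end

context setting begin

lemma is_factor_app: "is_factor w u \<Longrightarrow> is_factor w (a @ u @ b)"
  unfolding is_factor_def by (metis append.assoc)

lemma Ffree_take: "Ffree ps \<Longrightarrow> Ffree (take n ps)"
  unfolding Ffree_def
  by (metis append_take_drop_id path_label_append is_factor_app append_Nil)

lemma Ffree_drop: "Ffree ps \<Longrightarrow> Ffree (drop n ps)"
  unfolding Ffree_def
  by (metis append_take_drop_id path_label_append is_factor_app append_Nil2)

lemma det_notfree: "v \<in> X \<Longrightarrow> \<not> Ffree (take N (det v @ rest))"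
proof -
  assume v: "v \<in> X"
  obtain q1 q2 q3 where q: "det v = q1 @ q2 @ q3" "length q1 + length q2 \<le> D + M" "path_label q2 \<in> F"
    using det[OF v] unfolding detp_def by blast
  have "take N (det v @ rest) = q1 @ q2 @ take (N - length q1 - length q2) (q3 @ rest)"
    using q(1,2) unfolding N_def by simp
  then have "is_factor (path_label q2) (path_label (take N (det v @ rest)))"
    by (simp add: path_label_append is_factor_def) blast
  then show ?thesis using q(3) unfolding Ffree_def by blast
qed

lemma ins_hd: "set ps \<subseteq> E \<Longrightarrow> N * length bs \<le> length ps \<Longrightarrow> bs \<noteq> [] \<Longrightarrow>
   ins bs ps \<noteq> [] \<and> e_init (hd (ins bs ps)) = e_init (hd ps)"
proof (cases bs)
  case (Cons b bs')
  assume a: "set ps \<subseteq> E" "N * length bs \<le> length ps"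
  have "ps \<noteq> []" using a(2) Cons N_pos by (cases ps) auto
  then have "hd ps \<in> E" using a(1) by auto
  then have vX: "e_init (hd ps) \<in> X" using edge_init by blast
  have tk: "take N ps \<noteq> []" "hd (take N ps) = hd ps" using \<open>ps \<noteq> []\<close> N_pos by (auto simp: hd_take)
  show ?thesis
  proof (cases b)
    case True
    have "det (e_init (hd ps)) \<noteq> []" using det_ne[OF vX] .
    moreover have "is_path E (e_init (hd ps)) (det (e_init (hd ps))) (e_init (hd ps))"
      using det[OF vX] unfolding detp_def by blast
    ultimately show ?thesis using Cons True is_path_hd by fastforce
  next
    case False then show ?thesis using Cons tk by auto
  qed
qed simp

lemma ins_inj:
  "set ps \<subseteq> E \<Longrightarrow> set ps' \<subseteq> E \<Longrightarrow> Ffree ps \<Longrightarrow> Ffree ps' \<Longrightarrow>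
   length bs = length ps div N \<Longrightarrow> length bs' = length ps' div N \<Longrightarrow>
   ins bs ps = ins bs' ps' \<Longrightarrow> bs = bs' \<and> ps = ps'"
proof (induction bs arbitrary: bs' ps ps')
  case Nil
  then have lp: "length ps < N" using N_pos by (simp add: div_eq_0_iff)
  show ?case
  proof (cases bs')
    case Nil then show ?thesis using \<open>ins [] ps = ins bs' ps'\<close> by simp
  next
    case (Cons b' bs'')
    then have "length ps' \<ge> N" using Nil.prems(6) N_pos
      by (metis div_less length_Cons less_not_refl2 not_le zero_less_Suc)
    then have "length (take N ps') = N" by simp
    then have "length (ins bs' ps') \<ge> N" using Cons by simp
    then show ?thesis using lp Nil.prems(7) by simp
  qed
next
  case (Cons b bs)
  have lp: "length ps \<ge> N" using Cons.prems(5) N_pos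
    by (metis div_less length_Cons less_not_refl2 not_le zero_less_Suc)
  have ldrop: "length bs = length (drop N ps) div N"
    using Cons.prems(5) lp N_pos by (simp add: le_div_geq)
  show ?case
  proof (cases bs')
    case Nil
    then have lp': "length ps' < N" using Cons.prems(6) N_pos by (simp add: div_eq_0_iff)
    have "length (take N ps) = N" using lp by simp
    then have lN: "length (ins (b#bs) ps) \<ge> N" by simp
    have e: "ins (b#bs) ps = ps'" using Cons.prems(7) Nil by simp
    have "length ps' \<ge> N" using e lN by metis
    then show ?thesis using lp' by simp
  next
    case (Cons b' bs'')
    have lp': "length ps' \<ge> N" using Cons.prems(6) N_pos Cons
      by (metis div_less length_Cons less_not_refl2 not_le zero_less_Suc)
    have ldrop': "length bs'' = length (drop N ps') div N"
      using Cons.prems(6) lp' N_pos Cons by (simp add: le_div_geq)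
    have n1: "N * length (b # bs) \<le> length ps"
      using Cons.prems(5) by (metis div_times_less_eq_dividend mult.commute)
    have n2: "N * length bs' \<le> length ps'"
      using Cons.prems(6) by (metis div_times_less_eq_dividend mult.commute)
    have "ps \<noteq> []" "ps' \<noteq> []" using lp lp' N_pos by auto
    then have "hd ps \<in> E" "hd ps' \<in> E" using Cons.prems(1,2) by auto
    then have vX: "e_init (hd ps) \<in> X" "e_init (hd ps') \<in> X"
      using edge_init by blast+
    have "e_init (hd ps) = e_init (hd ps')"
      using ins_hd[OF Cons.prems(1) n1] ins_hd[OF Cons.prems(2) n2] Cons.prems(7) Cons by auto
    define v where "v = e_init (hd ps)"
    have eq: "(if b then det v else []) @ take N ps @ ins bs (drop N ps)
            = (if b' then det v else []) @ take N ps' @ ins bs'' (drop N ps')"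
    proof -
      have e0: "ins (b#bs) ps = ins (b'#bs'') ps'" using Cons.prems(7) Cons by simp
      have hv: "e_init (hd ps') = v" using \<open>e_init (hd ps) = e_init (hd ps')\<close> v_def by simp
      show ?thesis using e0 by (simp only: ins.simps v_def[symmetric] hv)
    qed
    have ltk: "length (take N ps) = N" "length (take N ps') = N" using lp lp' by auto
    have fr: "Ffree (take N ps)" "Ffree (take N ps')" using Cons.prems(3,4) Ffree_take by auto
    have bb: "b = b'"
    proof (rule ccontr)
      assume "b \<noteq> b'"
      then show False
      proof (cases b)
        case True
        with \<open>b \<noteq> b'\<close> have "det v @ (take N ps @ ins bs (drop N ps)) = take N ps' @ ins bs'' (drop N ps')"
          using eq by simp
        then have "take N (det v @ (take N ps @ ins bs (drop N ps))) = take N ps'" using ltk by simp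
        then show False using det_notfree[OF vX(1)[folded v_def]] fr by metis
      next
        case False
        with \<open>b \<noteq> b'\<close> have "det v @ (take N ps' @ ins bs'' (drop N ps')) = take N ps @ ins bs (drop N ps)"
          using eq by simp
        then have "take N (det v @ (take N ps' @ ins bs'' (drop N ps'))) = take N ps" using ltk by simp
        then show False using det_notfree[OF vX(1)[folded v_def]] fr by metis
      qed
    qed
    with eq have "take N ps @ ins bs (drop N ps) = take N ps' @ ins bs'' (drop N ps')" by simp
    then have t: "take N ps = take N ps'" and r: "ins bs (drop N ps) = ins bs'' (drop N ps')"
      using ltk by (auto simp: append_eq_append_conv)
    have "bs = bs'' \<and> drop N ps = drop N ps'"
      by (rule Cons.IH[OF _ _ _ _ ldrop ldrop' r])
        (use Cons.prems in \<open>auto dest: in_set_dropD intro: Ffree_drop\<close>)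
    then have a: "bs = bs''" "drop N ps = drop N ps'" by auto
    have "ps = take N ps @ drop N ps" by simp
    also have "\<dots> = take N ps' @ drop N ps'" using t a(2) by simp
    also have "\<dots> = ps'" by simp
    finally show ?thesis using a(1) bb Cons by simp
  qed
qed

end


lemma bool_lists_Suc: "{bs::bool list. length bs = Suc k} = Cons True ` {bs. length bs = k} \<union> Cons False ` {bs. length bs = k}"
  by (auto simp: length_Suc_conv image_def)

lemma bool_lists_fin: "finite {bs::bool list. length bs = k}"
  by (induction k) (auto simp: bool_lists_Suc)

lemma sum_bool_lists: "(\<Sum>bs\<in>{bs::bool list. length bs = k}. (g::real) ^ length (filter id bs)) = (1 + g) ^ k"
proof (induction k)
  case 0
  have "{bs::bool list. length bs = 0} = {[]}" by auto
  then show ?case by simp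
next
  case (Suc k)
  let ?A = "{bs::bool list. length bs = k}"
  have "(\<Sum>bs\<in>{bs::bool list. length bs = Suc k}. g ^ length (filter id bs))
      = (\<Sum>bs\<in>Cons True ` ?A. g ^ length (filter id bs)) + (\<Sum>bs\<in>Cons False ` ?A. g ^ length (filter id bs))"
    unfolding bool_lists_Suc by (rule sum.union_disjoint) (auto simp: bool_lists_fin)
  also have "\<dots> = g * (\<Sum>bs\<in>?A. g ^ length (filter id bs)) + (\<Sum>bs\<in>?A. g ^ length (filter id bs))"
    by (simp add: sum.reindex sum_distrib_left)
  also have "\<dots> = (1 + g) ^ Suc k" using Suc by (simp add: algebra_simps id_def)
  finally show ?case .
qed

context setting begin

lemma key_bound:
  assumes x: "x \<in> X" and y: "y \<in> X" and x0: "x0 \<in> X" and y0: "y0 \<in> X" and z: "z > 0"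
    and summ: "summable (\<lambda>m. pmat_pow X E p m x0 y0 * z ^ m)"
  shows "\<exists>B. \<forall>n. pF_pow E p F n x y * z ^ n * (1 + gam z) ^ (n div N) \<le> B"
proof -
  obtain q0 where q0: "is_path E x0 q0 x" using conn x x0 by blast
  obtain q1 where q1: "is_path E y q1 y0" using conn y y0 by blast
  define c where "c = W z q0 * W z q1"
  have Wpos: "W z q > 0" if "set q \<subseteq> E" for q
  proof -
    have "path_prob p q \<ge> \<alpha> ^ length q" using path_prob_ge[OF pge _ that] apos by simp
    moreover have "\<alpha> ^ length q > 0" using apos by simp
    ultimately show ?thesis unfolding W_def using z by simp
  qed
  have "set q0 \<subseteq> E" "set q1 \<subseteq> E" using is_path_set[OF q0] is_path_set[OF q1] .
  then have c0: "c > 0" unfolding c_def using Wpos by simp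
  define G where "G = suminf (\<lambda>m. pmat_pow X E p m x0 y0 * z ^ m)"
  have "pF_pow E p F n x y * z ^ n * (1 + gam z) ^ (n div N) \<le> G / c" for n
  proof -
    define FP where "FP = {ps\<in>Paths E n x y. Ffree ps}"
    define BL where "BL = {bs::bool list. length bs = n div N}"
    define I where "I = Sigma FP (\<lambda>_. BL)"
    define f where "f = (\<lambda>(ps, bs). q0 @ ins bs ps @ q1)"
    define bound where "bound = length q0 + length q1 + n + L * (n div N)"
    define U where "U = (\<Union>m\<in>{..<Suc bound}. Paths E m x0 y0)"
    have finFP: "finite FP" unfolding FP_def using Paths_fin by simp
    have finBL: "finite BL" unfolding BL_def by (rule bool_lists_fin)
    have finI: "finite I" unfolding I_def using finFP finBL by simp
    have FPp: "is_path E x ps y" "length ps = n" "Ffree ps" "set ps \<subseteq> E" if "ps \<in> FP" for ps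
    proof -
      from that have a: "is_path E x ps y" "length ps = n" "Ffree ps" unfolding FP_def Paths_def by auto
      then show "is_path E x ps y" "length ps = n" "Ffree ps" "set ps \<subseteq> E" using is_path_set[OF a(1)] by auto
    qed
    have Nle: "N * (n div N) \<le> n" by (metis div_times_less_eq_dividend mult.commute)
    have g0: "gam z \<ge> 0" using gam_pos[OF z] by simp
    have "c * (pF_pow E p F n x y * z ^ n * (1 + gam z) ^ (n div N))
        = (\<Sum>ps\<in>FP. \<Sum>bs\<in>BL. c * W z ps * gam z ^ length (filter id bs))"
    proof -
      have "pF_pow E p F n x y * z ^ n = (\<Sum>ps\<in>FP. W z ps)"
        unfolding pF_paths FP_def[symmetric] sum_distrib_right W_def
        by (intro sum.cong refl) (simp add: FP_def Paths_def)
      moreover have "(\<Sum>bs\<in>BL. gam z ^ length (filter id bs)) = (1 + gam z) ^ (n div N)"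
        unfolding BL_def by (rule sum_bool_lists)
      ultimately have "pF_pow E p F n x y * z ^ n = (\<Sum>ps\<in>FP. W z ps)"
         "(\<Sum>bs\<in>BL. gam z ^ length (filter id bs)) = (1 + gam z) ^ (n div N)" by blast+
      note h = this
      have "(\<Sum>ps\<in>FP. \<Sum>bs\<in>BL. c * W z ps * gam z ^ length (filter id bs))
          = (\<Sum>ps\<in>FP. c * W z ps * (\<Sum>bs\<in>BL. gam z ^ length (filter id bs)))"
        by (simp add: sum_distrib_left)
      also have "\<dots> = (\<Sum>ps\<in>FP. c * W z ps * (1 + gam z) ^ (n div N))"
        using h by simp
      also have "\<dots> = c * ((\<Sum>ps\<in>FP. W z ps) * (1 + gam z) ^ (n div N))"
        by (simp add: sum_distrib_left sum_distrib_right mult.assoc)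
      finally show ?thesis using h by simp
    qed
    also have "\<dots> = (\<Sum>(ps, bs)\<in>I. c * W z ps * gam z ^ length (filter id bs))"
      unfolding I_def by (rule sum.Sigma[OF finFP]) (use finBL in simp)
    also have "\<dots> \<le> (\<Sum>(ps, bs)\<in>I. W z (f (ps, bs)))"
    proof (rule sum_mono, clarify)
      fix ps bs assume "(ps, bs) \<in> I"
      then have ps: "ps \<in> FP" and bs: "length bs = n div N" unfolding I_def BL_def by auto
      have w: "W z (ins bs ps) \<ge> W z ps * gam z ^ length (filter id bs)"
        by (rule ins_weight[OF z FPp(4)[OF ps]]) (use bs Nle FPp(2)[OF ps] in simp)
      have "W z (f (ps, bs)) = W z q0 * W z (ins bs ps) * W z q1"
        unfolding f_def by (simp add: W_append)
      also have "\<dots> = c * W z (ins bs ps)" unfolding c_def by simp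
      finally show "c * W z ps * gam z ^ length (filter id bs) \<le> W z (f (ps, bs))"
        using w c0 by (simp add: mult.assoc mult_left_mono)
    qed
    also have "\<dots> = (\<Sum>r\<in>f ` I. W z r)"
    proof -
      have "inj_on f I"
      proof (rule inj_onI, clarify)
        fix ps bs ps' bs' assume a: "(ps, bs) \<in> I" "(ps', bs') \<in> I" "f (ps, bs) = f (ps', bs')"
        then have "ins bs ps = ins bs' ps'" unfolding f_def by simp
        moreover have "ps \<in> FP" "ps' \<in> FP" "length bs = n div N" "length bs' = n div N"
          using a unfolding I_def BL_def by auto
        ultimately show "ps = ps' \<and> bs = bs'"
          using ins_inj[of ps ps' bs bs'] FPp by metis
      qed
      then show ?thesis by (simp add: sum.reindex)
    qed
    also have "\<dots> \<le> (\<Sum>r\<in>U. W z r)"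
    proof (rule sum_mono2)
      show "finite U" unfolding U_def using Paths_fin by simp
      show "f ` I \<subseteq> U"
      proof clarify
        fix ps bs assume "(ps, bs) \<in> I"
        then have ps: "ps \<in> FP" and bs: "length bs = n div N" unfolding I_def BL_def by auto
        have ip: "is_path E x (ins bs ps) y"
          by (rule ins_path[OF FPp(1)[OF ps] x]) (use bs Nle FPp(2)[OF ps] in simp)
        have nl: "N * length bs \<le> length ps" using bs Nle FPp(2)[OF ps] by simp
        have il: "length (ins bs ps) \<le> n + L * (n div N)"
          using ins_len[OF FPp(4)[OF ps] nl] bs FPp(2)[OF ps] by simp
        have "is_path E x0 (q0 @ ins bs ps @ q1) y0" unfolding is_path_append
          using q0 ip q1 by blast
        then have "is_path E x0 (f (ps, bs)) y0" unfolding f_def by simp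
        moreover have "length (f (ps, bs)) < Suc bound"
          unfolding f_def bound_def using il by simp
        ultimately show "f (ps, bs) \<in> U" unfolding U_def Paths_def by auto
      qed
      show "0 \<le> W z r" if "r \<in> U - f ` I" for r
      proof -
        from that obtain m where "is_path E x0 r y0" unfolding U_def Paths_def by blast
        then show ?thesis using W_nonneg[OF _ is_path_set] z by (meson less_imp_le)
      qed
    qed
    also have "\<dots> = (\<Sum>m<Suc bound. \<Sum>r\<in>Paths E m x0 y0. W z r)"
      unfolding U_def by (rule sum.UNION_disjoint) (auto simp: Paths_fin, auto simp: Paths_def)
    also have "\<dots> = (\<Sum>m<Suc bound. pmat_pow X E p m x0 y0 * z ^ m)"
    proof (intro sum.cong refl)
      fix m
      have "(\<Sum>r\<in>Paths E m x0 y0. W z r) = (\<Sum>r\<in>Paths E m x0 y0. path_prob p r * z ^ m)"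
        unfolding W_def by (intro sum.cong refl) (simp add: Paths_def)
      then show "(\<Sum>r\<in>Paths E m x0 y0. W z r) = pmat_pow X E p m x0 y0 * z ^ m"
        by (simp add: pmat_pow_paths sum_distrib_right)
    qed
    also have "\<dots> \<le> G" unfolding G_def
      by (rule sum_le_suminf[OF summ]) (use pmat_pow_nonneg z in auto)
    finally have "c * (pF_pow E p F n x y * z ^ n * (1 + gam z) ^ (n div N)) \<le> G" .
    then show ?thesis using c0 by (simp add: le_divide_eq mult.commute)
  qed
  then show ?thesis by blast
qed

end


lemma mid_lt: "(a::real) < b \<Longrightarrow> a < (a + b) / 2" by (simp add: field_simps)

lemma limsup_root_le:
  fixes a :: "nat \<Rightarrow> real"
  assumes ab: "\<And>n. a n \<le> C * s ^ n" and C: "C > 0" and s: "s > 0"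
  shows "limsup (\<lambda>n. ereal (root n (a n))) \<le> ereal s"
proof -
  have ev: "\<forall>\<^sub>F n in sequentially. ereal (root n (a n)) \<le> ereal (root n C * s)"
    using eventually_gt_at_top[of "0::nat"]
  proof eventually_elim
    case (elim n)
    have "root n (a n) \<le> root n (C * s ^ n)" by (rule real_root_le_mono[OF elim ab])
    also have "\<dots> = root n C * root n (s ^ n)" by (rule real_root_mult)
    also have "root n (s ^ n) = s" using elim s by (simp add: real_root_power_cancel)
    finally show ?case by simp
  qed
  have "(\<lambda>n. root n C * s) \<longlonglongrightarrow> 1 * s"
    by (intro tendsto_mult LIMSEQ_root_const C tendsto_const)
  then have "(\<lambda>n. ereal (root n C * s)) \<longlonglongrightarrow> ereal s" using tendsto_ereal by fastforce
  then have "limsup (\<lambda>n. ereal (root n C * s)) = ereal s"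
    by (rule lim_imp_Limsup[OF trivial_limit_sequentially])
  moreover have "limsup (\<lambda>n. ereal (root n (a n))) \<le> limsup (\<lambda>n. ereal (root n C * s))"
    by (rule Limsup_mono[OF ev])
  ultimately show ?thesis by simp
qed

context setting begin

lemma rep_path: "is_path E v c v \<Longrightarrow> is_path E v (concat (replicate k c)) v"
  by (induction k) (auto simp: is_path_append)

lemma rho_ge: assumes x0: "x0 \<in> X" and y0: "y0 \<in> X"
  shows "ereal \<alpha> \<le> spec_rad X E p x0 y0"
proof -
  obtain v where v: "v \<in> X" using Xne by blast
  then obtain y w ps z where "y \<in> X" "w \<in> F" "is_path E y ps z" "path_label ps = w"
    using dense by blast
  moreover have "w \<noteq> []" using \<open>w \<in> F\<close> Fsub by auto
  ultimately have "ps \<noteq> []" "is_path E y ps z" by (auto simp: path_label_def)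
  then obtain e ps' where "ps = e # ps'" "e \<in> E" by (cases ps) auto
  obtain qa where qa: "is_path E y0 qa (e_init e)" using conn y0 edge_init[OF \<open>e \<in> E\<close>] by blast
  obtain qb where qb: "is_path E (e_term e) qb y0" using conn y0 edge_term[OF \<open>e \<in> E\<close>] by blast
  define cyc where "cyc = qa @ [e] @ qb"
  have cyc: "is_path E y0 cyc y0" unfolding cyc_def is_path_append using qa qb \<open>e \<in> E\<close> by auto
  have lc: "length cyc \<ge> 1" unfolding cyc_def by simp
  obtain q where q: "is_path E x0 q y0" using conn x0 y0 by blast
  define f where "f = (\<lambda>n. ereal (root n (pmat_pow X E p n x0 y0)))"
  have fk: "f (length q + k * length cyc) \<ge> ereal \<alpha>" if "k \<ge> 1" for k
  proof -
    define pk where "pk = q @ concat (replicate k cyc)"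
    define m where "m = length q + k * length cyc"
    have pk: "is_path E x0 pk y0" unfolding pk_def is_path_append using q rep_path[OF cyc] by blast
    have lpk: "length pk = m" unfolding pk_def m_def by (simp add: length_concat sum_list_replicate)
    have m0: "m > 0" unfolding m_def using that lc by (simp add: Suc_le_eq)
    have "pk \<in> Paths E m x0 y0" unfolding Paths_def using pk lpk by simp
    then have "path_prob p pk \<le> pmat_pow X E p m x0 y0"
      unfolding pmat_pow_paths
    proof (rule member_le_sum)
      show "finite (Paths E m x0 y0)" by (rule Paths_fin)
      show "0 \<le> path_prob p r" if "r \<in> Paths E m x0 y0 - {pk}" for r
      proof -
        from that have "is_path E x0 r y0" unfolding Paths_def by blast
        then show ?thesis using path_prob_nonneg[OF p_nonneg is_path_set] by blast
      qed
    qed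
    moreover have "path_prob p pk \<ge> \<alpha> ^ m"
      using path_prob_ge[OF pge _ is_path_set[OF pk]] apos lpk by simp
    ultimately have "\<alpha> ^ m \<le> pmat_pow X E p m x0 y0" by simp
    then have "root m (\<alpha> ^ m) \<le> root m (pmat_pow X E p m x0 y0)"
      by (rule real_root_le_mono[OF m0])
    moreover have "root m (\<alpha> ^ m) = \<alpha>" using m0 apos by (simp add: real_root_power_cancel)
    ultimately show ?thesis unfolding f_def m_def by simp
  qed
  have "ereal \<alpha> \<le> (INF n. Sup (f ` {n..}))"
  proof (rule INF_greatest)
    fix n
    have "Suc n * 1 \<le> Suc n * length cyc" by (rule mult_le_mono2[OF lc])
    then have "length q + Suc n * length cyc \<ge> n" by simp
    then have "f (length q + Suc n * length cyc) \<le> Sup (f ` {n..})"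
      by (intro Sup_upper) auto
    then show "ereal \<alpha> \<le> Sup (f ` {n..})" using fk[of "Suc n"] by simp
  qed
  then show ?thesis unfolding spec_rad_def limsup_INF_SUP f_def .
qed

lemma rho_le1: "spec_rad X E p x0 y0 \<le> 1"
  unfolding spec_rad_def
proof (rule Limsup_bounded)
  show "\<forall>\<^sub>F n in sequentially. ereal (root n (pmat_pow X E p n x0 y0)) \<le> 1"
    using eventually_gt_at_top[of "0::nat"]
  proof eventually_elim
    case (elim n)
    have "root n (pmat_pow X E p n x0 y0) \<le> root n 1"
      by (rule real_root_le_mono[OF elim pmat_pow_le1])
    then show ?case using real_root_one[OF elim] by simp
  qed
qed

lemma summable_G:
  assumes x0: "x0 \<in> X" and y0: "y0 \<in> X" and z: "z > 0"
    and lt: "spec_rad X E p x0 y0 < ereal (1/z)"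
  shows "summable (\<lambda>m. pmat_pow X E p m x0 y0 * z ^ m)"
proof -
  obtain q where q1: "spec_rad X E p x0 y0 < ereal q" and q2: "ereal q < ereal (1/z)"
    using ereal_dense2[OF lt] by blast
  have "ereal \<alpha> < ereal q" using order.strict_trans1[OF rho_ge[OF x0 y0] q1] .
  then have q0: "q > 0" using apos by simp
  have qz: "q * z < 1" using q2 z by (simp add: field_simps)
  have ev: "\<forall>\<^sub>F m in sequentially. ereal (root m (pmat_pow X E p m x0 y0)) < ereal q"
    using Limsup_lessD[OF q1[unfolded spec_rad_def]] .
  have "\<forall>\<^sub>F m in sequentially. norm (pmat_pow X E p m x0 y0 * z ^ m) \<le> (q * z) ^ m"
    using ev eventually_gt_at_top[of "0::nat"]
  proof eventually_elim
    case (elim m)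
    let ?a = "pmat_pow X E p m x0 y0"
    have a0: "?a \<ge> 0" by (rule pmat_pow_nonneg)
    have "?a = root m ?a ^ m" using real_root_pow_pos2[OF elim(2) a0] by simp
    also have "\<dots> \<le> q ^ m"
      using elim(1) a0 real_root_ge_zero[OF a0, of m] by (intro power_mono) auto
    finally have "?a \<le> q ^ m" .
    then have "?a * z ^ m \<le> q ^ m * z ^ m" using z by (simp add: mult_right_mono)
    then show ?case using a0 z by (simp add: power_mult_distrib)
  qed
  moreover have "summable (\<lambda>m. (q * z) ^ m)"
    using qz q0 z by (intro summable_geometric) simp
  ultimately show ?thesis by (rule summable_comparison_test_ev)
qed

definition g0 :: real where "g0 = gam (1/2)"
definition theta :: real where "theta = (1 + g0) powr (1 / real N)"

lemma g0_pos: "g0 > 0" unfolding g0_def by (rule gam_pos) simp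

lemma theta_gt1: "theta > 1"
proof -
  have "(1 + g0) powr 0 < (1 + g0) powr (1 / real N)"
    using g0_pos N_pos by (intro powr_less_mono) auto
  then show ?thesis unfolding theta_def using g0_pos by simp
qed

lemma gam_mono: "z \<ge> 1/2 \<Longrightarrow> gam z \<ge> g0"
  unfolding g0_def gam_def using apos by (intro power_mono mult_left_mono) auto

lemma theta_pow: "theta ^ n \<le> (1 + g0) ^ (n div N) * (1 + g0)"
proof -
  have t1: "1 + g0 > 1" using g0_pos by simp
  have "theta ^ n = (1 + g0) powr (real n / real N)"
    unfolding theta_def using t1 by (simp add: powr_realpow[symmetric] powr_powr)
  also have "\<dots> \<le> (1 + g0) powr (real (n div N + 1))"
  proof (rule powr_mono)
    have m: "n mod N < N" using N_pos by simp
    have d: "N * (n div N) + n mod N = n" by (rule mult_div_mod_eq)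
    have "N * (n div N + 1) = N * (n div N) + N" by simp
    then have "n < N * (n div N + 1)" using m d by linarith
    then have "real n < real N * real (n div N + 1)" by (metis of_nat_less_iff of_nat_mult)
    then show "real n / real N \<le> real (n div N + 1)" using N_pos by (simp add: divide_le_eq mult.commute)
  qed (use t1 in simp)
  also have "\<dots> = (1 + g0) ^ (n div N + 1)" by (rule powr_realpow) (use t1 in simp)
  also have "\<dots> = (1 + g0) ^ (n div N) * (1 + g0)" by simp
  finally show ?thesis .
qed

lemma rhoF_le:
  assumes x: "x \<in> X" and y: "y \<in> X" and x0: "x0 \<in> X" and y0: "y0 \<in> X"
    and z: "z \<ge> 1/2" and lt: "spec_rad X E p x0 y0 < ereal (1/z)"
  shows "spec_rad_F E p F x y \<le> ereal (1 / (z * theta))"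
proof -
  have z0: "z > 0" using z by simp
  obtain B where B: "\<And>n. pF_pow E p F n x y * z ^ n * (1 + gam z) ^ (n div N) \<le> B"
    using key_bound[OF x y x0 y0 z0 summable_G[OF x0 y0 z0 lt]] by blast
  have "pF_pow E p F 0 x y * z ^ 0 * (1 + gam z) ^ (0 div N) \<ge> 0" using pF_nonneg[of 0 x y] by simp
  then have B0: "B \<ge> 0" using B[of 0] by linarith
  define C where "C = (B + 1) * (1 + g0)"
  have C0: "C > 0" unfolding C_def using B0 g0_pos by simp
  have th: "theta > 0" using theta_gt1 by simp
  show ?thesis unfolding spec_rad_F_def
  proof (rule limsup_root_le)
    fix n
    let ?a = "pF_pow E p F n x y"
    have a0: "?a \<ge> 0" by (rule pF_nonneg)
    have "(1 + g0) ^ (n div N) \<le> (1 + gam z) ^ (n div N)"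
      using gam_mono[OF z] g0_pos by (intro power_mono) auto
    then have "?a * z ^ n * (1 + g0) ^ (n div N) \<le> B"
      using B[of n] a0 z0 by (meson mult_left_mono order_trans zero_le_power mult_nonneg_nonneg less_imp_le)
    then have "?a * z ^ n * ((1 + g0) ^ (n div N) * (1 + g0)) \<le> B * (1 + g0)"
      using g0_pos by (simp add: mult.assoc[symmetric] mult_right_mono)
    moreover have "?a * z ^ n * theta ^ n \<le> ?a * z ^ n * ((1 + g0) ^ (n div N) * (1 + g0))"
      using theta_pow[of n] a0 z0 by (intro mult_left_mono) auto
    ultimately have "?a * (z * theta) ^ n \<le> B * (1 + g0)"
      by (simp add: power_mult_distrib mult.assoc)
    then have "?a \<le> B * (1 + g0) / (z * theta) ^ n"
      using z0 th by (simp add: le_divide_eq)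
    also have "\<dots> \<le> C / (z * theta) ^ n"
      unfolding C_def using z0 th g0_pos by (intro divide_right_mono) auto
    also have "\<dots> = C * (1 / (z * theta)) ^ n" by (simp add: power_divide)
    finally show "?a \<le> C * (1 / (z * theta)) ^ n" .
  qed (use C0 z0 th in auto)
qed

lemma final:
  assumes x0: "x0 \<in> X" and y0: "y0 \<in> X"
  shows "(SUP x\<in>X. SUP y\<in>X. spec_rad_F E p F x y) < spec_rad X E p x0 y0"
proof -
  define r where "r = spec_rad X E p x0 y0"
  have ra: "ereal \<alpha> \<le> r" unfolding r_def by (rule rho_ge[OF x0 y0])
  have r1: "r \<le> 1" unfolding r_def by (rule rho_le1)
  define r0 where "r0 = real_of_ereal r"
  have rr: "r = ereal r0" unfolding r0_def using ra r1 by (cases r) auto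
  have r0a: "r0 \<ge> \<alpha>" "r0 \<le> 1" using ra r1 rr by auto
  have r0p: "r0 > 0" using r0a apos by simp
  have th: "theta > 1" by (rule theta_gt1)
  have bnd: "spec_rad_F E p F x y \<le> ereal (r0 / theta)" if x: "x \<in> X" and y: "y \<in> X" for x y
  proof (rule ccontr)
    assume "\<not> ?thesis"
    then have gt: "spec_rad_F E p F x y > ereal (r0 / theta)" by simp
    have "spec_rad_F E p F x y \<le> ereal (1 / (1/2 * theta))"
    proof (rule rhoF_le[OF x y x0 y0])
      show "spec_rad X E p x0 y0 < ereal (1 / (1 / 2))" using r1 unfolding r_def[symmetric] by (simp add: order.strict_trans1)
    qed simp
    then obtain s where s: "spec_rad_F E p F x y = ereal s"
      using gt by (cases "spec_rad_F E p F x y") auto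
    have s1: "s > r0 / theta" using gt s by simp
    then have st: "s * theta > r0" using th by (simp add: field_simps)
    then have sp: "s * theta > 0" using r0p by simp
    define z where "z = max (1/2) ((1 / (s * theta) + 1 / r0) / 2)"
    have i1: "1 / (s * theta) < 1 / r0" using st r0p by (simp add: frac_less2)
    have i2: "1/2 < 1 / r0" using r0a r0p by (simp add: field_simps)
    have zlt: "z < 1 / r0" unfolding z_def using i1 i2 by simp
    have "1 / (s * theta) < (1 / (s * theta) + 1 / r0) / 2" by (rule mid_lt[OF i1])
    then have zgt: "z > 1 / (s * theta)" unfolding z_def by (metis less_le_trans max.cobounded2)
    have zh: "z \<ge> 1/2" unfolding z_def by simp
    have "spec_rad_F E p F x y \<le> ereal (1 / (z * theta))"
    proof (rule rhoF_le[OF x y x0 y0 zh])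
      have zr: "z * r0 < 1" using zlt r0p by (simp add: less_divide_eq)
      have "r0 < 1 / z" using zr zh by (simp add: less_divide_eq mult.commute)
      then show "spec_rad X E p x0 y0 < ereal (1 / z)" using rr unfolding r_def by simp
    qed
    then have "s \<le> 1 / (z * theta)" using s by simp
    moreover have "1 / (z * theta) < s"
    proof -
      have "1 < z * (s * theta)" using zgt sp by (simp add: divide_less_eq)
      then have a: "1 < s * (z * theta)" by (simp add: ac_simps)
      have "z * theta > 0" using th zh by simp
      then show ?thesis using a by (simp add: divide_less_eq ac_simps)
    qed
    ultimately show False by simp
  qed
  have "(SUP x\<in>X. SUP y\<in>X. spec_rad_F E p F x y) \<le> ereal (r0 / theta)"
    using bnd by (intro SUP_least) auto
  also have "ereal (r0 / theta) < ereal r0"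
  proof -
    have "r0 / theta < r0 / 1" using r0p th by (intro divide_strict_left_mono) auto
    then show ?thesis by simp
  qed
  finally show ?thesis using rr unfolding r_def by simp
qed

end

theorem mainTheorem16:
  fixes X :: "'v set" and \<Sigma> :: "'a set" and E :: "('v,'a) edge set"
    and p :: "('v,'a) edge \<Rightarrow> real" and \<alpha> :: real and F :: "'a list set"
  assumes "finite \<Sigma>"
    and "E \<subseteq> X \<times> \<Sigma> \<times> X"
    and "uniformly_connected X E"
    and "\<alpha> > 0"
    and "\<forall>e\<in>E. p e \<ge> \<alpha>"
    and "\<forall>x\<in>X. \<forall>A. A \<subseteq> {e\<in>E. e_init e = x} \<and> finite A \<longrightarrow> (\<Sum>e\<in>A. p e) \<le> 1"
    and "finite F" and "F \<noteq> {}" and "F \<subseteq> {w. w \<noteq> [] \<and> set w \<subseteq> \<Sigma>}"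
    and "relatively_dense X E F"
    and "x0 \<in> X" and "y0 \<in> X"
  shows "(SUP x\<in>X. SUP y\<in>X. spec_rad_F E p F x y) < spec_rad X E p x0 y0"
proof -
  have conn: "\<forall>x\<in>X. \<forall>y\<in>X. \<exists>ps. is_path E x ps y"
    using assms(3) unfolding uniformly_connected_def by blast
  obtain K :: nat where K: "\<forall>e\<in>E. \<exists>ps. is_path E (e_term e) ps (e_init e) \<and> length ps \<le> K"
    using assms(3) unfolding uniformly_connected_def by blast
  obtain D :: nat where D: "\<forall>x\<in>X. \<exists>y\<in>X. \<exists>w\<in>F. dplus E x y \<le> D \<and> (\<exists>ps z. is_path E y ps z \<and> path_label ps = w)"
    using assms(10) unfolding relatively_dense_def by blast
  have Xne: "X \<noteq> {}" using assms(11) by blast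
  interpret setting X \<Sigma> E p \<alpha> F K D
    by (rule setting.intro, fact assms(1), fact assms(2), fact assms(4), fact assms(5), fact assms(6),
        fact assms(7), fact assms(8), fact assms(9), fact conn, fact K, fact D, fact Xne)
  show ?thesis by (rule final[OF assms(11) assms(12)])
qed

end
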